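(* A topological space $X$ is openly irresolvable if and only if the formula $\Diamond^*(\Box^*\varphi\lor\Box^*\neg\varphi)$ is $d$-valid in $X$ for every modal formula $\varphi$.
   Context: $\Diamond^*\psi$ abbreviates $\psi\lor\Diamond\psi$ and $\Box^*\psi$ abbreviates $\psi\land\Box\psi$. $d$-semantics: a model on a space $X$ is a valuation of propositional variables by subsets of $X$; truth sets $\mathcal{M}_d(\varphi)$ interpret Boolean connectives as set operations, $\mathcal{M}_d(\Diamond\varphi)=\mathrm{d}_X(\mathcal{M}_d(\varphi))$ where $\mathrm{d}_XY$ is the set of limit points of $Y$ ($x$ such that every $O-\{x\}$, $O$ an open neighbourhood of $x$, meets $Y$), and $\Box=\neg\Diamond\neg$. A formula is $d$-valid in $X$ if its truth set is $X$ in every model on $X$. A space is resolvable if it has two disjoint non-empty dense subsets, irresolvable otherwise; $X$ is openly irresolvable if every non-empty open subspace of $X$ is irresolvable. *)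

theory Defs
  imports "HOL-Analysis.Analysis"
begin

datatype fm = Var nat | Bot | Neg fm | Conj fm fm | Disj fm fm | Dia fm

definition Box :: "fm \<Rightarrow> fm" where
  "Box \<phi> = Neg (Dia (Neg \<phi>))"

definition DiaStar :: "fm \<Rightarrow> fm" where
  "DiaStar \<psi> = Disj \<psi> (Dia \<psi>)"

definition BoxStar :: "fm \<Rightarrow> fm" where
  "BoxStar \<psi> = Conj \<psi> (Box \<psi>)"

primrec dtruth :: "'a topology \<Rightarrow> (nat \<Rightarrow> 'a set) \<Rightarrow> fm \<Rightarrow> 'a set" where
  "dtruth X V (Var p) = V p \<inter> topspace X"
| "dtruth X V Bot = {}"
| "dtruth X V (Neg \<phi>) = topspace X - dtruth X V \<phi>"
| "dtruth X V (Conj \<phi> \<psi>) = dtruth X V \<phi> \<inter> dtruth X V \<psi>"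
| "dtruth X V (Disj \<phi> \<psi>) = dtruth X V \<phi> \<union> dtruth X V \<psi>"
| "dtruth X V (Dia \<phi>) = X derived_set_of (dtruth X V \<phi>)"

definition d_valid :: "'a topology \<Rightarrow> fm \<Rightarrow> bool" where
  "d_valid X \<phi> \<longleftrightarrow> (\<forall>V. (\<forall>p. V p \<subseteq> topspace X) \<longrightarrow> dtruth X V \<phi> = topspace X)"

definition resolvable :: "'a topology \<Rightarrow> bool" where
  "resolvable X \<longleftrightarrow> (\<exists>A B. A \<subseteq> topspace X \<and> B \<subseteq> topspace X \<and> A \<inter> B = {} \<and>
      A \<noteq> {} \<and> B \<noteq> {} \<and> X closure_of A = topspace X \<and> X closure_of B = topspace X)"

definition irresolvable :: "'a topology \<Rightarrow> bool" where
  "irresolvable X \<longleftrightarrow> \<not> resolvable X"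

definition openly_irresolvable :: "'a topology \<Rightarrow> bool" where
  "openly_irresolvable X \<longleftrightarrow>
     (\<forall>U. openin X U \<and> U \<noteq> {} \<longrightarrow> irresolvable (subtopology X U))"

end

theory Submission
  imports Defs
begin

lemma dtruth_sub: "dtruth X V \<phi> \<subseteq> topspace X"
  by (induction \<phi>) (auto simp: derived_set_of_subset_topspace)

lemma boxstar_int:
  assumes "S \<subseteq> topspace X"
  shows "S \<inter> (topspace X - X derived_set_of (topspace X - S)) = X interior_of S"
proof -
  have "X interior_of S = topspace X - X closure_of (topspace X - S)"
    by (rule interior_of_closure_of)
  also have "\<dots> = topspace X - ((topspace X - S) \<union> X derived_set_of (topspace X - S))"
    by (simp add: closure_of_alt Int_absorb1)
  finally show ?thesis using assms by blast
qed

lemma diastar_cl: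
  assumes "S \<subseteq> topspace X"
  shows "S \<union> X derived_set_of S = X closure_of S"
  using assms by (simp add: closure_of_alt Int_absorb1)

lemma truth_formula:
  assumes "\<forall>p. V p \<subseteq> topspace X"
  shows "dtruth X V (DiaStar (Disj (BoxStar \<phi>) (BoxStar (Neg \<phi>)))) =
     X closure_of (X interior_of (dtruth X V \<phi>) \<union> X interior_of (topspace X - dtruth X V \<phi>))"
proof -
  let ?A = "dtruth X V \<phi>"
  have A: "?A \<subseteq> topspace X" by (rule dtruth_sub)
  have B: "topspace X - ?A \<subseteq> topspace X" by blast
  have e1: "dtruth X V (BoxStar \<phi>) = X interior_of ?A"
    using boxstar_int[OF A] by (simp add: BoxStar_def Box_def)
  have e2: "dtruth X V (BoxStar (Neg \<phi>)) = X interior_of (topspace X - ?A)"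
    using boxstar_int[OF B] by (simp add: BoxStar_def Box_def)
  have s: "X interior_of ?A \<union> X interior_of (topspace X - ?A) \<subseteq> topspace X"
    by (meson Un_least interior_of_subset_topspace)
  show ?thesis
    using diastar_cl[OF s] by (simp add: DiaStar_def e1 e2)
qed

lemma oi_char:
  "openly_irresolvable X \<longleftrightarrow>
   (\<forall>A. A \<subseteq> topspace X \<longrightarrow> X closure_of (X interior_of A \<union> X interior_of (topspace X - A)) = topspace X)"
proof
  assume oi: "openly_irresolvable X"
  show "\<forall>A. A \<subseteq> topspace X \<longrightarrow> X closure_of (X interior_of A \<union> X interior_of (topspace X - A)) = topspace X"
  proof (intro allI impI, rule ccontr)
    fix A assume A: "A \<subseteq> topspace X"
    let ?S = "X interior_of A \<union> X interior_of (topspace X - A)"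
    assume ne: "X closure_of ?S \<noteq> topspace X"
    define U where "U = topspace X - X closure_of ?S"
    have Uo: "openin X U" unfolding U_def by (rule openin_diff[OF openin_topspace closedin_closure_of])
    have Une: "U \<noteq> {}" using ne closure_of_subset_topspace[of X ?S] unfolding U_def by blast
    have key: "U \<subseteq> X closure_of D"
      if D: "D \<subseteq> topspace X" and DD: "\<And>W. openin X W \<Longrightarrow> W \<subseteq> U \<Longrightarrow> W \<inter> D = {} \<Longrightarrow> W \<subseteq> ?S"
      for D
    proof
      fix x assume x: "x \<in> U"
      show "x \<in> X closure_of D"
        unfolding in_closure_of
      proof (intro conjI allI impI)
        show "x \<in> topspace X" using x U_def by blast
        fix V assume V: "x \<in> V \<and> openin X V"
        let ?W = "V \<inter> U"
        have Wo: "openin X ?W" using V Uo by (simp add: openin_Int)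
        show "\<exists>y. y \<in> D \<and> y \<in> V"
        proof (rule ccontr)
          assume "\<not> (\<exists>y. y \<in> D \<and> y \<in> V)"
          then have "?W \<inter> D = {}" by blast
          then have "?W \<subseteq> ?S" using DD[OF Wo] by blast
          moreover have "?S \<subseteq> X closure_of ?S"
            by (rule closure_of_subset) (meson Un_least interior_of_subset_topspace)
          ultimately show False using x V U_def by blast
        qed
      qed
    qed
    have c1: "U \<subseteq> X closure_of (U \<inter> A)"
    proof (rule key)
      show "U \<inter> A \<subseteq> topspace X" using A by blast
      fix W assume "openin X W" "W \<subseteq> U" "W \<inter> (U \<inter> A) = {}"
      then have "W \<subseteq> X interior_of (topspace X - A)"
        by (intro interior_of_maximal) (auto dest: openin_subset)
      then show "W \<subseteq> ?S" by blast
    qed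
    have c2: "U \<subseteq> X closure_of (U - A)"
    proof (rule key)
      show "U - A \<subseteq> topspace X" using Uo openin_subset by blast
      fix W assume "openin X W" "W \<subseteq> U" "W \<inter> (U - A) = {}"
      then have "W \<subseteq> X interior_of A"
        by (intro interior_of_maximal) auto
      then show "W \<subseteq> ?S" by blast
    qed
    have "resolvable (subtopology X U)"
      unfolding resolvable_def
    proof (intro exI conjI)
      have tU: "topspace (subtopology X U) = U" using Uo openin_subset by auto
      show "U \<inter> A \<subseteq> topspace (subtopology X U)" "U - A \<subseteq> topspace (subtopology X U)"
        using tU by auto
      show "(U \<inter> A) \<inter> (U - A) = {}" by blast
      show "U \<inter> A \<noteq> {}" using c1 Une by auto
      show "U - A \<noteq> {}" using c2 Une by (metis closure_of_empty subset_empty)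
      show "subtopology X U closure_of (U \<inter> A) = topspace (subtopology X U)"
        using c1 tU by (simp add: closure_of_subtopology_open[OF disjI1[OF Uo]]) blast
      show "subtopology X U closure_of (U - A) = topspace (subtopology X U)"
        using c2 tU by (simp add: closure_of_subtopology_open[OF disjI1[OF Uo]]) blast
    qed
    then show False using oi Uo Une unfolding openly_irresolvable_def irresolvable_def by blast
  qed
next
  assume H: "\<forall>A. A \<subseteq> topspace X \<longrightarrow> X closure_of (X interior_of A \<union> X interior_of (topspace X - A)) = topspace X"
  show "openly_irresolvable X"
    unfolding openly_irresolvable_def irresolvable_def
  proof (intro allI impI notI)
    fix U assume U: "openin X U \<and> U \<noteq> {}"
    assume "resolvable (subtopology X U)"
    then obtain D1 D2 where D: "D1 \<subseteq> U" "D2 \<subseteq> U" "D1 \<inter> D2 = {}"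
      and c1: "subtopology X U closure_of D1 = U" and c2: "subtopology X U closure_of D2 = U"
    proof -
      have TU0: "topspace X \<inter> U = U" using U openin_subset by blast
      from \<open>resolvable (subtopology X U)\<close> obtain A B where
        "A \<subseteq> topspace X \<inter> U" "B \<subseteq> topspace X \<inter> U" "A \<inter> B = {}"
        "subtopology X U closure_of A = topspace X \<inter> U" "subtopology X U closure_of B = topspace X \<inter> U"
        unfolding resolvable_def by auto
      then show ?thesis using that TU0 by simp
    qed
    have C1: "U \<subseteq> X closure_of D1" using c1 closure_of_subtopology_open[of X U D1] U by blast
    have C2: "U \<subseteq> X closure_of D2" using c2 closure_of_subtopology_open[of X U D2] U by blast
    have TU: "U \<subseteq> topspace X" using U openin_subset by blast
    let ?S = "X interior_of D1 \<union> X interior_of (topspace X - D1)"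
    have e1: "U \<inter> X interior_of D1 = {}"
    proof -
      have o: "openin X (U \<inter> X interior_of D1)" using U by (simp add: openin_Int)
      have "(U \<inter> X interior_of D1) \<inter> D2 = {}" using D interior_of_subset[of X D1] by blast
      then have "(U \<inter> X interior_of D1) \<inter> X closure_of D2 = {}"
        using openin_Int_closure_of_eq_empty[OF o] by blast
      then show ?thesis using C2 by blast
    qed
    have e2: "U \<inter> X interior_of (topspace X - D1) = {}"
    proof -
      have o: "openin X (U \<inter> X interior_of (topspace X - D1))" using U by (simp add: openin_Int)
      have "(U \<inter> X interior_of (topspace X - D1)) \<inter> D1 = {}" using interior_of_subset[of X "topspace X - D1"] by blast
      then have "(U \<inter> X interior_of (topspace X - D1)) \<inter> X closure_of D1 = {}"
        using openin_Int_closure_of_eq_empty[OF o] by blast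
      then show ?thesis using C1 by blast
    qed
    have "U \<inter> ?S = {}" using e1 e2 by blast
    then have "U \<inter> X closure_of ?S = {}" using openin_Int_closure_of_eq_empty[of X U ?S] U by simp
    moreover have "X closure_of ?S = topspace X" using H D TU by blast
    ultimately show False using U TU by blast
  qed
qed

theorem lemma7:
  fixes X :: "'a topology"
  shows "openly_irresolvable X \<longleftrightarrow>
           (\<forall>\<phi>. d_valid X (DiaStar (Disj (BoxStar \<phi>) (BoxStar (Neg \<phi>)))))"
proof -
  have "(\<forall>\<phi>. d_valid X (DiaStar (Disj (BoxStar \<phi>) (BoxStar (Neg \<phi>))))) \<longleftrightarrow>
   (\<forall>A. A \<subseteq> topspace X \<longrightarrow> X closure_of (X interior_of A \<union> X interior_of (topspace X - A)) = topspace X)"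
  proof
    assume h: "\<forall>\<phi>. d_valid X (DiaStar (Disj (BoxStar \<phi>) (BoxStar (Neg \<phi>))))"
    show "\<forall>A. A \<subseteq> topspace X \<longrightarrow> X closure_of (X interior_of A \<union> X interior_of (topspace X - A)) = topspace X"
    proof (intro allI impI)
      fix A assume A: "A \<subseteq> topspace X"
      have V: "\<forall>p. (\<lambda>_. A) p \<subseteq> topspace X" using A by (simp only: simp_thms)
      have "dtruth X (\<lambda>_. A) (DiaStar (Disj (BoxStar (Var 0)) (BoxStar (Neg (Var 0))))) = topspace X"
        using h[rule_format, of "Var 0"] V unfolding d_valid_def by (metis (no_types))
      moreover have "dtruth X (\<lambda>_. A) (Var 0) = A" using A by auto
      ultimately show "X closure_of (X interior_of A \<union> X interior_of (topspace X - A)) = topspace X"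
        using truth_formula[OF V, of "Var 0"] by simp
    qed
  next
    assume h: "\<forall>A. A \<subseteq> topspace X \<longrightarrow> X closure_of (X interior_of A \<union> X interior_of (topspace X - A)) = topspace X"
    show "\<forall>\<phi>. d_valid X (DiaStar (Disj (BoxStar \<phi>) (BoxStar (Neg \<phi>))))"
      unfolding d_valid_def
    proof (intro allI impI)
      fix \<phi> and V :: "nat \<Rightarrow> 'a set" assume V: "\<forall>p. V p \<subseteq> topspace X"
      show "dtruth X V (DiaStar (Disj (BoxStar \<phi>) (BoxStar (Neg \<phi>)))) = topspace X"
        unfolding truth_formula[OF V] using h dtruth_sub[of X V \<phi>] by blast
    qed
  qed
  then show ?thesis using oi_char by blast
qed

end
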